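(* Let $p=2m\ge 4$ be even and let $U$ be the graph consisting of a cycle of length $p$ together with exactly one pendant vertex attached to one vertex of the cycle. Let $\Delta$ be the distance squared matrix of $U$. Then $(i_+(\Delta),i_-(\Delta),i_0(\Delta))=(m,m+1,0)$.
   Context: For a connected graph with vertices $1,\dots,n$, the distance squared matrix is the matrix with $(i,j)$ entry $d_{ij}^2$, where $d_{ij}$ is the graph distance between $i$ and $j$. For a real symmetric matrix $M$, $i_+(M)$, $i_-(M)$, $i_0(M)$ denote the number of positive eigenvalues, the number of negative eigenvalues (counted with multiplicity), and the multiplicity of the eigenvalue $0$. *)

theory Defs
  imports "Jordan_Normal_Form.Char_Poly"
begin

(* Graph on vertex set {0..<n} given by a symmetric adjacency relation E.
   Graph distance = length of a shortest walk (graph is assumed connected). *)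
definition graph_dist :: "(nat \<Rightarrow> nat \<Rightarrow> bool) \<Rightarrow> nat \<Rightarrow> nat \<Rightarrow> nat" where
  "graph_dist E i j = (LEAST k. (E ^^ k) i j)"

definition dist_sq_matrix :: "nat \<Rightarrow> (nat \<Rightarrow> nat \<Rightarrow> bool) \<Rightarrow> real mat" where
  "dist_sq_matrix n E = mat n n (\<lambda>(i, j). (real (graph_dist E i j))^2)"

(* U: cycle 0 - 1 - ... - (p-1) - 0, plus pendant vertex p attached to vertex 0 *)
definition unicycle_pendant_adj :: "nat \<Rightarrow> nat \<Rightarrow> nat \<Rightarrow> bool" where
  "unicycle_pendant_adj p i j =
     ((i < p \<and> j < p \<and> (j = (i + 1) mod p \<or> i = (j + 1) mod p))
      \<or> (i = 0 \<and> j = p) \<or> (i = p \<and> j = 0))"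

definition i_plus :: "real mat \<Rightarrow> nat" where
  "i_plus M = (\<Sum>a \<in> {a. a > 0 \<and> eigenvalue M a}. order a (char_poly M))"

definition i_minus :: "real mat \<Rightarrow> nat" where
  "i_minus M = (\<Sum>a \<in> {a. a < 0 \<and> eigenvalue M a}. order a (char_poly M))"

definition i_zero :: "real mat \<Rightarrow> nat" where
  "i_zero M = (if eigenvalue M 0 then order 0 (char_poly M) else 0)"

end

theory Submission
  imports Defs "Jordan_Normal_Form.Schur_Decomposition"
begin


lemma real_sym_has_eigenvalue:
  fixes A :: "real mat"
  assumes A: "A \<in> carrier_mat n n" and sym: "transpose_mat A = A" and n: "n > 0"
  shows "\<exists>e. eigenvalue A e"
proof -
  define Ac where "Ac = map_mat (of_real :: real \<Rightarrow> complex) A"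
  have Ac: "Ac \<in> carrier_mat n n" using A unfolding Ac_def by auto
  from char_poly_factorized[OF Ac] obtain as where
    fac: "char_poly Ac = (\<Prod>a\<leftarrow>as. [:- a, 1:])" and len: "length as = n" by blast
  from len n obtain a as' where as: "as = a # as'" by (cases as) auto
  have "poly (char_poly Ac) a = 0" unfolding fac as by simp
  hence "eigenvalue Ac a" using eigenvalue_root_char_poly[OF Ac] by simp
  then obtain v where ev: "eigenvector Ac v a" unfolding eigenvalue_def by blast
  hence v: "v \<in> carrier_vec n" and v0: "v \<noteq> 0\<^sub>v n" and eq: "Ac *\<^sub>v v = a \<cdot>\<^sub>v v"
    unfolding eigenvector_def using Ac by auto
  have Aij: "\<And>i j. i < n \<Longrightarrow> j < n \<Longrightarrow> Ac $$ (i,j) = of_real (A $$ (i,j))"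
    unfolding Ac_def using A by auto
  have symA: "\<And>i j. i < n \<Longrightarrow> j < n \<Longrightarrow> A $$ (i,j) = A $$ (j,i)"
    using sym A by (metis carrier_matD index_transpose_mat(1))
  have row: "\<And>i. i < n \<Longrightarrow> (\<Sum>j<n. Ac $$ (i,j) * v $ j) = a * v $ i"
  proof -
    fix i assume i: "i < n"
    have "(Ac *\<^sub>v v) $ i = (a \<cdot>\<^sub>v v) $ i" using eq by simp
    thus "(\<Sum>j<n. Ac $$ (i,j) * v $ j) = a * v $ i"
      using i v Ac unfolding mult_mat_vec_def scalar_prod_def
      by (auto simp: row_def atLeast0LessThan)
  qed
  define s where "s = (\<Sum>i<n. cnj (v $ i) * (\<Sum>j<n. Ac $$ (i,j) * v $ j))"
  define N where "N = (\<Sum>i<n. cnj (v $ i) * v $ i)"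
  have "s = (\<Sum>i<n. cnj (v $ i) * (a * v $ i))" unfolding s_def
    by (rule sum.cong) (auto simp: row)
  hence sN: "s = a * N" unfolding N_def
    by (simp add: sum_distrib_left mult.commute mult.left_commute)
  have "cnj s = (\<Sum>i<n. \<Sum>j<n. v $ i * (of_real (A $$ (i,j)) * cnj (v $ j)))"
    unfolding s_def by (simp add: Aij sum_distrib_left)
  also have "\<dots> = (\<Sum>j<n. \<Sum>i<n. v $ i * (of_real (A $$ (i,j)) * cnj (v $ j)))"
    by (rule sum.swap)
  also have "\<dots> = s" unfolding s_def
    by (auto simp: Aij sum_distrib_left symA intro!: sum.cong)
  finally have cs: "cnj s = s" .
  have Nreal: "N = of_real (\<Sum>i<n. (cmod (v $ i))^2)"
    unfolding N_def of_real_sum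
    by (rule sum.cong) (auto simp: complex_norm_square mult.commute simp del: of_real_power)
  obtain i where i: "i < n" "v $ i \<noteq> 0" using v v0 by (metis vec_eq_iff carrier_vecD index_zero_vec(1) index_zero_vec(2))
  have "(\<Sum>i<n. (cmod (v $ i))^2) > 0"
  proof -
    have "(cmod (v $ i))^2 \<le> (\<Sum>i<n. (cmod (v $ i))^2)"
      by (rule member_le_sum) (use i in auto)
    moreover have "(cmod (v $ i))^2 > 0" using i by auto
    ultimately show ?thesis by linarith
  qed
  hence N0: "N \<noteq> 0" unfolding Nreal by (metis of_real_eq_0_iff less_irrefl)
  have "cnj N = N" unfolding Nreal by simp
  hence "cnj a * N = a * N" using cs sN by (metis complex_cnj_mult)
  hence "cnj a = a" using N0 by simp
  hence areal: "a = of_real (Re a)" by (metis Reals_cnj_iff Reals_cases Re_complex_of_real)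
  have cph: "char_poly Ac = map_poly of_real (char_poly A)" unfolding Ac_def by (rule of_real_hom.char_poly_hom[OF A])
  have "poly (map_poly of_real (char_poly A)) a = (0::complex)"
    using \<open>poly (char_poly Ac) a = 0\<close> unfolding cph .
  hence "poly (map_poly of_real (char_poly A)) (of_real (Re a)) = (0::complex)"
    using areal by metis
  hence "poly (char_poly A) (Re a) = 0" unfolding of_real_hom.poly_map_poly by simp
  thus ?thesis using eigenvalue_root_char_poly[OF A] by blast
qed



lemma conj_real_vec[simp]: "conjugate (v :: real vec) = v"
  by (rule eq_vecI) (auto simp: conjugate_real_def)

lemma real_sym_diag:
  fixes A :: "real mat"
  assumes "A \<in> carrier_mat n n" "transpose_mat A = A"
  shows "\<exists>Q D. Q \<in> carrier_mat n n \<and> D \<in> carrier_mat n n \<and> transpose_mat Q * Q = 1\<^sub>m n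
     \<and> Q * transpose_mat Q = 1\<^sub>m n \<and> diagonal_mat D \<and> transpose_mat Q * A * Q = D"
  using assms
proof (induction n arbitrary: A)
  case 0
  thus ?case by (intro exI[of _ "1\<^sub>m 0"] exI[of _ A]) (auto simp: diagonal_mat_def)
next
  case (Suc n A)
  note A = Suc.prems(1) and sym = Suc.prems(2)
  obtain e where "eigenvalue A e" using real_sym_has_eigenvalue[OF A sym] by auto
  then obtain v where ev: "eigenvector A v e" unfolding eigenvalue_def by blast
  hence v: "v \<in> carrier_vec (Suc n)" and v0: "v \<noteq> 0\<^sub>v (Suc n)" and eq: "A *\<^sub>v v = e \<cdot>\<^sub>v v"
    unfolding eigenvector_def using A by auto
  interpret cof_vec_space "Suc n" "TYPE(real)" .
  define b where "b = basis_completion v"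
  define ws where "ws = gram_schmidt (Suc n) b"
  from basis_completion[OF v v0, folded b_def]
  have dist_b: "distinct b" 
    and indep: "\<not> lin_dep (set b)" and b: "set b \<subseteq> carrier_vec (Suc n)" and hdb: "hd b = v" 
    and len_b: "length b = Suc n" by auto
  from hdb len_b obtain vs where bv: "b = v # vs" by (cases b, auto)
  from gram_schmidt_result[OF b dist_b indep refl, folded ws_def]
  have ws: "set ws \<subseteq> carrier_vec (Suc n)" "corthogonal ws" "length ws = Suc n" 
    by (auto simp: len_b)
  from gram_schmidt_hd[OF v, of vs, folded bv] have hdws: "hd ws = v" unfolding ws_def .
  have wsc: "\<And>i. i < Suc n \<Longrightarrow> ws ! i \<in> carrier_vec (Suc n)" using ws by auto
  have wsorth: "\<And>i j. i < Suc n \<Longrightarrow> j < Suc n \<Longrightarrow> (ws ! i \<bullet> ws ! j = 0) = (i \<noteq> j)"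
    using corthogonalD[OF ws(2)] ws(3) by simp
  have wspos: "\<And>i. i < Suc n \<Longrightarrow> ws ! i \<bullet> ws ! i > 0"
    using wsorth conjugate_square_ge_0_vec[of "ws ! _"]
    by (metis conj_real_vec order_le_less scalar_prod_def)
  define c where "c = (\<lambda>i. 1 / sqrt (ws ! i \<bullet> ws ! i))"
  define us where "us = map (\<lambda>i. c i \<cdot>\<^sub>v ws ! i) [0..<Suc n]"
  have len_us: "length us = Suc n" unfolding us_def by simp
  have usi: "\<And>i. i < Suc n \<Longrightarrow> us ! i = c i \<cdot>\<^sub>v ws ! i" unfolding us_def
    by (simp del: upt_Suc)
  have usc: "\<And>i. i < Suc n \<Longrightarrow> us ! i \<in> carrier_vec (Suc n)" using usi wsc by simp
  have usorth: "\<And>i j. i < Suc n \<Longrightarrow> j < Suc n \<Longrightarrow> us ! i \<bullet> us ! j = (if i = j then 1 else 0)"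
  proof -
    fix i j assume i: "i < Suc n" and j: "j < Suc n"
    have "us ! i \<bullet> us ! j = c i * c j * (ws ! i \<bullet> ws ! j)"
      using usi[OF i] usi[OF j] wsc[OF i] wsc[OF j] by simp
    also have "\<dots> = (if i = j then 1 else 0)"
    proof (cases "i = j")
      case True
      have "c i * c i = 1 / (ws ! i \<bullet> ws ! i)" unfolding c_def using wspos[OF i]
        by (simp add: real_sqrt_mult[symmetric])
      thus ?thesis using True wspos[OF i] by simp
    next
      case False thus ?thesis using wsorth[OF i j] by simp
    qed
    finally show "us ! i \<bullet> us ! j = (if i = j then 1 else 0)" .
  qed
  have "ws ! 0 = v" using hdws ws(3) by (cases ws) auto
  hence us0: "us ! 0 = c 0 \<cdot>\<^sub>v v" using usi[of 0] by simp
  define W where "W = mat_of_cols (Suc n) us"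
  have W: "W \<in> carrier_mat (Suc n) (Suc n)" unfolding W_def using len_us by auto
  have colW: "\<And>i. i < Suc n \<Longrightarrow> col W i = us ! i" unfolding W_def
    using col_mat_of_cols len_us usc by auto
  have WTW: "transpose_mat W * W = 1\<^sub>m (Suc n)"
    by (rule eq_matI) (use W in \<open>auto simp: colW usorth\<close>)
  have WWT: "W * transpose_mat W = 1\<^sub>m (Suc n)"
    using mat_mult_left_right_inverse[OF _ W WTW] W by auto
  define A' where "A' = transpose_mat W * A * W"
  have A': "A' \<in> carrier_mat (Suc n) (Suc n)" unfolding A'_def using W A by auto
  have A'sym: "transpose_mat A' = A'"
  proof -
    have "transpose_mat A' = transpose_mat W * (transpose_mat (transpose_mat W * A))"
      unfolding A'_def using W A by (intro transpose_mult[of _ "Suc n" "Suc n"]) auto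
    also have "transpose_mat (transpose_mat W * A) = transpose_mat A * W"
      using W A transpose_mult[of "transpose_mat W" "Suc n" "Suc n" A "Suc n"] by simp
    finally show ?thesis unfolding A'_def using sym W A
      by (simp add: assoc_mult_mat[of _ "Suc n" "Suc n"])
  qed
  have Au0: "A *\<^sub>v us ! 0 = e \<cdot>\<^sub>v us ! 0" unfolding us0 using eq v A
    by (simp add: mult_mat_vec smult_smult_assoc mult.commute)
  have A'col0: "\<And>i. i < Suc n \<Longrightarrow> A' $$ (i, 0) = (if i = 0 then e else 0)"
  proof -
    fix i assume i: "i < Suc n"
    have "A' $$ (i, 0) = col W i \<bullet> (A *\<^sub>v col W 0)"
      unfolding A'_def using W A i
      by (simp add: assoc_mult_mat[of _ "Suc n" "Suc n"] mult_mat_vec_def col_def scalar_prod_def)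
    also have "\<dots> = us ! i \<bullet> (e \<cdot>\<^sub>v us ! 0)" using colW[OF i] colW[of 0] Au0 by simp
    also have "\<dots> = e * (us ! i \<bullet> us ! 0)" using usc[OF i] usc[of 0] by simp
    finally show "A' $$ (i, 0) = (if i = 0 then e else 0)" using usorth[OF i, of 0] by simp
  qed
  have A'row0: "\<And>j. j < Suc n \<Longrightarrow> A' $$ (0, j) = (if j = 0 then e else 0)"
    using A'col0 A'sym A' by (metis carrier_matD index_transpose_mat(1) zero_less_Suc)
  define A3 where "A3 = mat n n (\<lambda>(i,j). A' $$ (Suc i, Suc j))"
  have A3: "A3 \<in> carrier_mat n n" unfolding A3_def by simp
  have A3sym: "transpose_mat A3 = A3" unfolding A3_def using A'sym A'
    by (intro eq_matI) (auto, metis Suc_less_eq carrier_matD index_transpose_mat(1))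
  from Suc.IH[OF A3 A3sym] obtain Q3 D3 where Q3: "Q3 \<in> carrier_mat n n" and D3: "D3 \<in> carrier_mat n n"
    and Q3TQ3: "transpose_mat Q3 * Q3 = 1\<^sub>m n" and diagD3: "diagonal_mat D3"
    and QAQ3: "transpose_mat Q3 * A3 * Q3 = D3" by blast
  define E where "E = (mat 1 1 (\<lambda>_. e) :: real mat)"
  have E: "E \<in> carrier_mat 1 1" unfolding E_def by simp
  have A'block: "A' = four_block_mat E (0\<^sub>m 1 n) (0\<^sub>m n 1) A3"
    by (rule eq_matI) (use A' A'col0 A'row0 in \<open>auto simp: E_def A3_def\<close>)
  define Q' where "Q' = four_block_mat (1\<^sub>m 1) (0\<^sub>m 1 n) (0\<^sub>m n 1) Q3"
  have Q': "Q' \<in> carrier_mat (Suc n) (Suc n)" unfolding Q'_def using Q3 by auto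
  have Q'T: "transpose_mat Q' = four_block_mat (1\<^sub>m 1) (0\<^sub>m 1 n) (0\<^sub>m n 1) (transpose_mat Q3)"
    unfolding Q'_def using Q3 by (simp add: transpose_four_block_mat[of _ 1 1 _ n _ n])
  have Q'TQ': "transpose_mat Q' * Q' = 1\<^sub>m (Suc n)"
  proof -
    have Q3T: "transpose_mat Q3 \<in> carrier_mat n n" using Q3 by simp
    show ?thesis
    unfolding Q'T unfolding Q'_def 
    unfolding mult_four_block_mat[OF one_carrier_mat zero_carrier_mat zero_carrier_mat Q3T
       one_carrier_mat zero_carrier_mat zero_carrier_mat Q3]
    using Q3 Q3TQ3 four_block_one_mat[of 1 n] by simp
  qed
  define D where "D = four_block_mat E (0\<^sub>m 1 n) (0\<^sub>m n 1) D3"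
  have D: "D \<in> carrier_mat (Suc n) (Suc n)" unfolding D_def using E D3 by auto
  have Q'AQ': "transpose_mat Q' * A' * Q' = D"
  proof -
    have Q3T: "transpose_mat Q3 \<in> carrier_mat n n" using Q3 by simp
    have "transpose_mat Q' * A' = four_block_mat E (0\<^sub>m 1 n) (0\<^sub>m n 1) (transpose_mat Q3 * A3)"
      unfolding Q'T A'block
      unfolding mult_four_block_mat[OF one_carrier_mat zero_carrier_mat zero_carrier_mat Q3T
        E zero_carrier_mat zero_carrier_mat A3]
      using Q3 A3 E by simp
    also have "\<dots> * Q' = D" unfolding Q'_def D_def
      unfolding mult_four_block_mat[OF E zero_carrier_mat zero_carrier_mat mult_carrier_mat[OF Q3T A3]
        one_carrier_mat zero_carrier_mat zero_carrier_mat Q3]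
      using Q3 A3 E QAQ3 D3 by (simp add: assoc_mult_mat[of _ n n])
    finally show ?thesis .
  qed
  define Q where "Q = W * Q'"
  have Q: "Q \<in> carrier_mat (Suc n) (Suc n)" unfolding Q_def using W Q' by auto
  have QT: "transpose_mat Q = transpose_mat Q' * transpose_mat W"
    unfolding Q_def using W Q' by (simp add: transpose_mult)
  have QTQ: "transpose_mat Q * Q = 1\<^sub>m (Suc n)"
  proof -
    have WT: "transpose_mat W \<in> carrier_mat (Suc n) (Suc n)" using W by simp
    have Q'T': "transpose_mat Q' \<in> carrier_mat (Suc n) (Suc n)" using Q' by simp
    have "transpose_mat Q' * transpose_mat W * (W * Q') = transpose_mat Q' * (transpose_mat W * (W * Q'))"
      by (rule assoc_mult_mat[OF Q'T' WT mult_carrier_mat[OF W Q']])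
    also have "transpose_mat W * (W * Q') = Q'"
      using assoc_mult_mat[OF WT W Q', symmetric] WTW Q' by simp
    finally have "transpose_mat Q' * transpose_mat W * (W * Q') = 1\<^sub>m (Suc n)" using Q'TQ' by simp
    thus ?thesis unfolding QT by (simp add: Q_def)
  qed
  have QQT: "Q * transpose_mat Q = 1\<^sub>m (Suc n)"
    using mat_mult_left_right_inverse[OF _ Q QTQ] Q by auto
  have "transpose_mat Q * A * Q = transpose_mat Q' * A' * Q'"
  proof -
    have WT: "transpose_mat W \<in> carrier_mat (Suc n) (Suc n)" using W by simp
    have Q'T': "transpose_mat Q' \<in> carrier_mat (Suc n) (Suc n)" using Q' by simp
    have WA: "transpose_mat W * A \<in> carrier_mat (Suc n) (Suc n)" using WT A by simp
    have "transpose_mat Q * A * Q = transpose_mat Q' * transpose_mat W * A * (W * Q')"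
      unfolding QT unfolding Q_def ..
    also have "\<dots> = transpose_mat Q' * transpose_mat W * A * W * Q'"
      by (rule assoc_mult_mat[OF mult_carrier_mat[OF mult_carrier_mat[OF Q'T' WT] A] W Q', symmetric])
    also have "transpose_mat Q' * transpose_mat W * A = transpose_mat Q' * (transpose_mat W * A)"
      by (rule assoc_mult_mat[OF Q'T' WT A])
    also have "transpose_mat Q' * (transpose_mat W * A) * W = transpose_mat Q' * A'"
      unfolding A'_def by (rule assoc_mult_mat[OF Q'T' WA W])
    finally show ?thesis .
  qed
  hence QAQ: "transpose_mat Q * A * Q = D" using Q'AQ' by simp
  have diagD: "diagonal_mat D" unfolding D_def diagonal_mat_def using diagD3 D3 E
    by (auto simp: diagonal_mat_def E_def)
  show ?case using Q D QTQ QQT diagD QAQ by blast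
qed


lemma order_prod_linear:
  "Polynomial.order a (\<Prod>x\<leftarrow>xs. [:- x, 1:]) = count_list xs (a::real)"
proof (induction xs)
  case Nil thus ?case by (simp add: order_0I)
next
  case (Cons x xs)
  have nz: "(\<Prod>x\<leftarrow>xs. [:- x, 1:]) \<noteq> (0 :: real poly)"
  proof -
    have "\<And>x. [:- x, 1:] \<noteq> (0::real poly)" by simp
    thus ?thesis unfolding prod_list_zero_iff by (metis (no_types, lifting) image_iff set_map)
  qed
  have eq: "(\<Prod>y\<leftarrow>x # xs. [:- y, 1:]) = [:- x, 1:] * (\<Prod>y\<leftarrow>xs. [:- y, 1:])" by simp
  have nz2: "[:- x, 1:] * (\<Prod>y\<leftarrow>xs. [:- y, 1:]) \<noteq> 0"
    using nz by (metis mult_eq_0_iff pCons_eq_0_iff one_neq_zero)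
  have "Polynomial.order a (\<Prod>x\<leftarrow>x # xs. [:- x, 1:]) = Polynomial.order a [:- x, 1:] + Polynomial.order a (\<Prod>x\<leftarrow>xs. [:- x, 1:])"
    unfolding eq by (rule order_mult[OF nz2])
  thus ?case using Cons by (simp add: order_linear')
qed

lemma sum_count_list:
  assumes "finite T" "{a \<in> set xs. P a} \<subseteq> T" "T \<subseteq> {a. P a}"
  shows "(\<Sum>a\<in>T. count_list xs a) = length (filter P xs)"
  using assms(2)
proof (induction xs)
  case Nil thus ?case by simp
next
  case (Cons x xs)
  have IH: "(\<Sum>a\<in>T. count_list xs a) = length (filter P xs)" using Cons by auto
  have "(\<Sum>a\<in>T. count_list (x # xs) a) = (\<Sum>a\<in>T. count_list xs a + (if x = a then 1 else 0))"
    by (rule sum.cong) auto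
  also have "\<dots> = (\<Sum>a\<in>T. count_list xs a) + (\<Sum>a\<in>T. if x = a then 1 else 0)"
    by (rule sum.distrib)
  also have "(\<Sum>a\<in>T. if x = a then 1 else 0) = (if P x then 1 else (0::nat))"
    using Cons.prems assms(1,3) by (auto simp: sum.delta)
  finally show ?case using IH by simp
qed

lemma conj_back:
  fixes A Q :: "'a :: comm_ring_1 mat"
  assumes A: "A \<in> carrier_mat n n" and Q: "Q \<in> carrier_mat n n" and QQT: "Q * transpose_mat Q = 1\<^sub>m n"
  shows "Q * (transpose_mat Q * A * Q) * transpose_mat Q = A"
proof -
  have QT: "transpose_mat Q \<in> carrier_mat n n" using Q by simp
  have QTA: "transpose_mat Q * A \<in> carrier_mat n n" using QT A by simp
  have "Q * (transpose_mat Q * A * Q) * transpose_mat Q = Q * (transpose_mat Q * A * Q * transpose_mat Q)"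
    by (rule assoc_mult_mat[OF Q mult_carrier_mat[OF QTA Q] QT])
  also have "transpose_mat Q * A * Q * transpose_mat Q = transpose_mat Q * A * (Q * transpose_mat Q)"
    by (rule assoc_mult_mat[OF QTA Q QT])
  also have "\<dots> = transpose_mat Q * A" by (simp only: QQT right_mult_one_mat[OF QTA])
  also have "Q * (transpose_mat Q * A) = Q * transpose_mat Q * A"
    by (rule assoc_mult_mat[OF Q QT A, symmetric])
  also have "\<dots> = A" using QQT A by simp
  finally show ?thesis .
qed

lemma diag_char_poly:
  fixes A Q D :: "real mat"
  assumes A: "A \<in> carrier_mat n n" and Q: "Q \<in> carrier_mat n n" and D: "D \<in> carrier_mat n n"
    and QTQ: "transpose_mat Q * Q = 1\<^sub>m n" and QQT: "Q * transpose_mat Q = 1\<^sub>m n"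
    and diag: "diagonal_mat D" and QAQ: "transpose_mat Q * A * Q = D"
  shows "char_poly A = (\<Prod>x\<leftarrow>map (\<lambda>i. D $$ (i,i)) [0..<n]. [:- x, 1:])"
proof -
  have QT: "transpose_mat Q \<in> carrier_mat n n" using Q by simp
  have AD: "A = Q * D * transpose_mat Q" unfolding QAQ[symmetric] by (rule conj_back[OF A Q QQT, symmetric])
  have "similar_mat A D" unfolding similar_mat_def
    by (rule exI[of _ Q], rule exI[of _ "transpose_mat Q"], rule similar_mat_witI[of _ _ n])
       (use QQT QTQ AD A D Q QT in auto)
  hence "char_poly A = char_poly D" by (rule char_poly_similar)
  also have "upper_triangular D" using diag D unfolding diagonal_mat_def upper_triangular_def by auto
  hence "char_poly D = (\<Prod>a\<leftarrow>diag_mat D. [:- a, 1:])" by (rule char_poly_upper_triangular[OF D])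
  also have "diag_mat D = map (\<lambda>i. D $$ (i,i)) [0..<n]" unfolding diag_mat_def using D by simp
  finally show ?thesis .
qed

lemma inertia_count:
  fixes A Q D :: "real mat"
  assumes A: "A \<in> carrier_mat n n" and Q: "Q \<in> carrier_mat n n" and D: "D \<in> carrier_mat n n"
    and QTQ: "transpose_mat Q * Q = 1\<^sub>m n" and QQT: "Q * transpose_mat Q = 1\<^sub>m n"
    and diag: "diagonal_mat D" and QAQ: "transpose_mat Q * A * Q = D"
  shows "(\<Sum>a \<in> {a. P a \<and> eigenvalue A a}. Polynomial.order a (char_poly A)) = card {i. i < n \<and> P (D $$ (i,i))}"
proof -
  define ds where "ds = map (\<lambda>i. D $$ (i,i)) [0..<n]"
  have cp: "char_poly A = (\<Prod>x\<leftarrow>ds. [:- x, 1:])" unfolding ds_def by (rule diag_char_poly[OF assms])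
  have ev: "\<And>a. eigenvalue A a \<longleftrightarrow> a \<in> set ds"
  proof -
    fix a
    have "eigenvalue A a \<longleftrightarrow> poly (char_poly A) a = 0" by (rule eigenvalue_root_char_poly[OF A])
    also have "\<dots> \<longleftrightarrow> a \<in> set ds" unfolding cp by (induction ds) auto
    finally show "eigenvalue A a \<longleftrightarrow> a \<in> set ds" .
  qed
  have "(\<Sum>a \<in> {a. P a \<and> eigenvalue A a}. Polynomial.order a (char_poly A)) = (\<Sum>a \<in> {a. P a \<and> a \<in> set ds}. count_list ds a)"
    unfolding cp order_prod_linear ev ..
  also have "\<dots> = length (filter P ds)" by (rule sum_count_list) auto
  also have "\<dots> = card {i. i < n \<and> P (D $$ (i,i))}" unfolding length_filter_conv_card ds_def
    by (rule arg_cong[where f=card]) auto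
  finally show ?thesis .
qed

lemma sylvester_bound:
  fixes A Q D N :: "real mat" and \<sigma> :: real
  assumes A: "A \<in> carrier_mat n n" and Q: "Q \<in> carrier_mat n n" and D: "D \<in> carrier_mat n n"
    and QTQ: "transpose_mat Q * Q = 1\<^sub>m n" and QQT: "Q * transpose_mat Q = 1\<^sub>m n"
    and diag: "diagonal_mat D" and QAQ: "transpose_mat Q * A * Q = D"
    and N: "N \<in> carrier_mat n k"
    and defi: "\<And>\<gamma>. \<gamma> \<in> carrier_vec k \<Longrightarrow> \<gamma> \<noteq> 0\<^sub>v k \<Longrightarrow> \<sigma> * ((N *\<^sub>v \<gamma>) \<bullet> (A *\<^sub>v (N *\<^sub>v \<gamma>))) > 0"
  shows "k \<le> card {i. i < n \<and> \<sigma> * D $$ (i,i) > 0}"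
proof (rule ccontr)
  define P where "P = {i. i < n \<and> \<sigma> * D $$ (i,i) > 0}"
  define r where "r = card P"
  assume "\<not> k \<le> card {i. i < n \<and> \<sigma> * D $$ (i,i) > 0}"
  hence rk: "r < k" unfolding r_def P_def by simp
  have finP: "finite P" unfolding P_def by simp
  define ps where "ps = sorted_list_of_set P"
  have lenps: "length ps = r" unfolding ps_def r_def using finP by simp
  have setps: "set ps = P" unfolding ps_def using finP by simp
  have QT: "transpose_mat Q \<in> carrier_mat n n" using Q by simp
  define R where "R = transpose_mat Q * N"
  have R: "R \<in> carrier_mat n k" unfolding R_def using QT N by simp
  define M where "M = mat\<^sub>r k k (\<lambda>i. if i = k - 1 then 0\<^sub>v k else vec k (\<lambda>j. if i < r then R $$ (ps ! i, j) else 0))"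
  have M: "M \<in> carrier_mat k k" unfolding M_def by simp
  have "det M = 0" unfolding M_def by (rule det_row_0) (use rk in auto)
  then obtain \<gamma> where g: "\<gamma> \<in> carrier_vec k" and g0: "\<gamma> \<noteq> 0\<^sub>v k" and Mg: "M *\<^sub>v \<gamma> = 0\<^sub>v k"
    using det_0_iff_vec_prod_zero[OF M] by blast
  define x where "x = N *\<^sub>v \<gamma>"
  define y where "y = R *\<^sub>v \<gamma>"
  have x: "x \<in> carrier_vec n" unfolding x_def using N g by simp
  have y: "y \<in> carrier_vec n" unfolding y_def using R g by simp
  have yx: "y = transpose_mat Q *\<^sub>v x" unfolding y_def x_def R_def using QT N g
    by (simp add: assoc_mult_mat_vec)
  have y0: "\<And>t. t \<in> P \<Longrightarrow> y $ t = 0"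
  proof -
    fix t assume t: "t \<in> P"
    then obtain i where i: "i < r" and ti: "t = ps ! i" using setps lenps by (metis in_set_conv_nth)
    have tn: "t < n" using t unfolding P_def by simp
    have "(M *\<^sub>v \<gamma>) $ i = 0" using Mg i rk by simp
    moreover have "(M *\<^sub>v \<gamma>) $ i = row M i \<bullet> \<gamma>" using i rk M by simp
    moreover have "row M i = row R t" unfolding M_def ti using i rk R ti tn
      by (intro eq_vecI) (auto)
    ultimately have "row R t \<bullet> \<gamma> = 0" by simp
    thus "y $ t = 0" unfolding y_def using R tn by simp
  qed
  have AD: "A = Q * D * transpose_mat Q" unfolding QAQ[symmetric] by (rule conj_back[OF A Q QQT, symmetric])
  have "x \<bullet> (A *\<^sub>v x) = x \<bullet> (Q *\<^sub>v (D *\<^sub>v y))"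
    unfolding AD yx using Q D QT x by (simp add: assoc_mult_mat_vec[of _ n n _ n])
  also have "\<dots> = (transpose_mat Q *\<^sub>v x) \<bullet> (D *\<^sub>v y)"
    using transpose_vec_mult_scalar[OF Q, of "D *\<^sub>v y" x] D y x by simp
  also have "\<dots> = (\<Sum>i<n. D $$ (i,i) * (y $ i)^2)"
  proof -
    have "(D *\<^sub>v y) $ i = D $$ (i,i) * y $ i" if i: "i < n" for i
    proof -
      have "(D *\<^sub>v y) $ i = (\<Sum>j<n. D $$ (i,j) * y $ j)"
        using D y i by (simp add: scalar_prod_def row_def atLeast0LessThan)
      also have "\<dots> = (\<Sum>j<n. if j = i then D $$ (i,i) * y $ i else 0)"
        by (rule sum.cong) (use diag D i in \<open>auto simp: diagonal_mat_def\<close>)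
      finally show ?thesis using i by simp
    qed
    thus ?thesis unfolding yx[symmetric] using D y
      by (simp add: scalar_prod_def atLeast0LessThan power2_eq_square mult.commute mult.left_commute)
  qed
  finally have "\<sigma> * (x \<bullet> (A *\<^sub>v x)) = (\<Sum>i<n. \<sigma> * D $$ (i,i) * (y $ i)^2)"
    by (simp add: sum_distrib_left mult.assoc)
  also have "\<dots> \<le> 0"
  proof (rule sum_nonpos)
    fix i assume i: "i \<in> {..<n}"
    show "\<sigma> * D $$ (i,i) * (y $ i)^2 \<le> 0"
    proof (cases "\<sigma> * D $$ (i,i) > 0")
      case True hence "i \<in> P" using i unfolding P_def by simp
      thus ?thesis using y0 by simp
    next
      case False thus ?thesis by (simp add: mult_nonpos_nonneg)
    qed
  qed
  finally show False using defi[OF g g0] unfolding x_def by simp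
qed




definition cyc :: "nat \<Rightarrow> nat \<Rightarrow> nat \<Rightarrow> nat" where
  "cyc p i j = min (if i \<le> j then j - i else i - j) (p - (if i \<le> j then j - i else i - j))"

definition dd :: "nat \<Rightarrow> nat \<Rightarrow> nat \<Rightarrow> nat" where
  "dd p i j = (if i < p \<and> j < p then cyc p i j else if i = p \<and> j = p then 0
     else if i = p then Suc (cyc p 0 j) else Suc (cyc p i 0))"

definition nx :: "nat \<Rightarrow> nat \<Rightarrow> nat" where "nx p j = (if j + 1 = p then 0 else j + 1)"
definition pv :: "nat \<Rightarrow> nat \<Rightarrow> nat" where "pv p j = (if j = 0 then p - 1 else j - 1)"

lemma mod_nx: "i < p \<Longrightarrow> (i + 1) mod p = nx p i"
  unfolding nx_def by (auto simp: mod_if)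

lemma adj_iff:
  assumes "p \<ge> 3"
  shows "unicycle_pendant_adj p i j \<longleftrightarrow>
    ((i < p \<and> j < p \<and> (j = nx p i \<or> i = nx p j)) \<or> (i = 0 \<and> j = p) \<or> (i = p \<and> j = 0))"
  unfolding unicycle_pendant_adj_def using mod_nx by auto

lemma cyc_lip:
  assumes "i < p" "j < p" "y < p" "j = nx p y \<or> y = nx p j"
  shows "cyc p i j \<le> Suc (cyc p i y)"
  using assms unfolding cyc_def nx_def
  by (auto split: if_splits)

lemma dd_lip:
  assumes p: "p \<ge> 3" and E: "unicycle_pendant_adj p y j" and i: "i \<le> p"
  shows "dd p i j \<le> Suc (dd p i y)"
proof -
  from E consider "y < p" "j < p" "j = nx p y \<or> y = nx p j" | "y = 0" "j = p" | "y = p" "j = 0"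
    unfolding adj_iff[OF p] by blast
  thus ?thesis
  proof cases
    case 1
    show ?thesis
    proof (cases "i < p")
      case True thus ?thesis using cyc_lip[of i p j y] 1 by (simp add: dd_def)
    next
      case False hence "i = p" using i by simp
      thus ?thesis using cyc_lip[of 0 p j y] 1 by (simp add: dd_def)
    qed
  next
    case 2 thus ?thesis using p i by (auto simp: dd_def)
  next
    case 3 thus ?thesis using p i by (auto simp: dd_def cyc_def)
  qed
qed

lemma relpowp_bound:
  assumes p: "p \<ge> 3" and i: "i \<le> p"
  shows "(unicycle_pendant_adj p ^^ k) i j \<Longrightarrow> dd p i j \<le> k"
proof (induction k arbitrary: j)
  case 0
  hence "j = i" by simp
  thus ?case unfolding dd_def cyc_def using i by auto
next
  case (Suc k)
  then obtain y where y: "(unicycle_pendant_adj p ^^ k) i y" and E: "unicycle_pendant_adj p y j" by auto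
  from Suc.IH[OF y] dd_lip[OF p E i] show ?case by simp
qed

definition cprv :: "nat \<Rightarrow> nat \<Rightarrow> nat \<Rightarrow> nat" where
  "cprv p i j = (if i < j then (if j - i \<le> p - (j - i) then j - 1 else nx p j)
       else (if i - j \<le> p - (i - j) then j + 1 else pv p j))"

lemma cyc_prev:
  assumes p: "p \<ge> 3" and i: "i < p" and j: "j < p" and c: "cyc p i j = Suc d"
  shows "cprv p i j < p \<and> (j = nx p (cprv p i j) \<or> cprv p i j = nx p j) \<and> cyc p i (cprv p i j) = d"
proof -
  have ij: "i \<noteq> j" using c unfolding cyc_def by auto
  consider (A) "i < j" "j - i \<le> p - (j - i)" | (B) "i < j" "\<not> j - i \<le> p - (j - i)"
    | (C) "j < i" "i - j \<le> p - (i - j)" | (D) "j < i" "\<not> i - j \<le> p - (i - j)"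
    using ij by linarith
  thus ?thesis
  proof cases
    case A
    hence y: "cprv p i j = j - 1" unfolding cprv_def by simp
    have "cyc p i j = j - i" using A unfolding cyc_def by simp
    hence "d = j - 1 - i" using c by simp
    moreover have "cyc p i (j - 1) = j - 1 - i" using A c unfolding cyc_def by auto
    moreover have "nx p (j - 1) = j" using A j unfolding nx_def by auto
    ultimately show ?thesis using y A j by auto
  next
    case B
    hence y: "cprv p i j = nx p j" unfolding cprv_def by simp
    have cij: "cyc p i j = p - (j - i)" using B unfolding cyc_def by simp
    show ?thesis
    proof (cases "j + 1 = p")
      case True
      hence "nx p j = 0" unfolding nx_def by simp
      moreover have "cyc p i 0 = i" using B True i unfolding cyc_def by auto
      ultimately show ?thesis using y c cij True p B by auto
    next
      case False
      hence "nx p j = j + 1" unfolding nx_def by simp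
      moreover have "cyc p i (j + 1) = p - (j + 1 - i)" using B False j unfolding cyc_def by auto
      ultimately show ?thesis using y c cij False j B by auto
    qed
  next
    case C
    hence y: "cprv p i j = j + 1" unfolding cprv_def by simp
    have "cyc p i j = i - j" using C unfolding cyc_def by simp
    moreover have "cyc p i (j + 1) = i - j - 1" using C unfolding cyc_def by auto
    moreover have "nx p j = j + 1" using C i unfolding nx_def by auto
    ultimately show ?thesis using y C c i by auto
  next
    case D
    hence y: "cprv p i j = pv p j" unfolding cprv_def by simp
    have cij: "cyc p i j = p - (i - j)" using D unfolding cyc_def by simp
    show ?thesis
    proof (cases "j = 0")
      case True
      hence "pv p j = p - 1" unfolding pv_def by simp
      moreover have "cyc p i (p - 1) = p - 1 - i" using D True i unfolding cyc_def by auto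
      moreover have "nx p (p - 1) = 0" using p unfolding nx_def by auto
      ultimately show ?thesis using y c cij True p i by auto
    next
      case False
      hence "pv p j = j - 1" unfolding pv_def by simp
      moreover have "cyc p i (j - 1) = p - (i - j + 1)" using D False i unfolding cyc_def by auto
      moreover have "nx p (j - 1) = j" using False j unfolding nx_def by auto
      ultimately show ?thesis using y c cij False D j by auto
    qed
  qed
qed

definition prv :: "nat \<Rightarrow> nat \<Rightarrow> nat \<Rightarrow> nat" where
  "prv p i j = (if i < p \<and> j < p then cprv p i j
    else if j = p then 0 else if j = 0 then p else cprv p 0 j)"

lemma prv_props:
  assumes p: "p \<ge> 3" and i: "i \<le> p" and j: "j \<le> p" and d: "dd p i j = Suc d"
  shows "prv p i j \<le> p \<and> unicycle_pendant_adj p (prv p i j) j \<and> dd p i (prv p i j) = d"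
proof (cases "i < p")
  case ip: True
  show ?thesis
  proof (cases "j < p")
    case True
    with ip d have "cyc p i j = Suc d" by (simp add: dd_def)
    from cyc_prev[OF p ip True this] show ?thesis using ip True
      unfolding adj_iff[OF p] prv_def dd_def by auto
  next
    case False hence "j = p" using j by simp
    thus ?thesis using ip d p unfolding adj_iff[OF p] prv_def dd_def by auto
  qed
next
  case False hence ip: "i = p" using i by simp
  show ?thesis
  proof (cases "j = 0")
    case True thus ?thesis using ip d p unfolding adj_iff[OF p] prv_def dd_def cyc_def by auto
  next
    case j0: False
    hence jp: "j < p" using j d ip by (cases "j = p") (auto simp: dd_def)
    have "cyc p 0 j = d" using d ip jp by (simp add: dd_def)
    moreover have "cyc p 0 j \<noteq> 0" using j0 jp unfolding cyc_def by auto
    ultimately obtain d' where d': "cyc p 0 j = Suc d'" "d = Suc d'" by (cases d) auto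
    from cyc_prev[OF p _ jp d'(1)] show ?thesis using ip jp j0 d' p
      unfolding adj_iff[OF p] prv_def dd_def by auto
  qed
qed

lemma relpowp_reach:
  assumes p: "p \<ge> 3" and i: "i \<le> p"
  shows "j \<le> p \<Longrightarrow> dd p i j = d \<Longrightarrow> (unicycle_pendant_adj p ^^ d) i j"
proof (induction d arbitrary: j)
  case 0
  hence "j = i" using i unfolding dd_def cyc_def by (auto split: if_splits)
  thus ?case by simp
next
  case (Suc d)
  from prv_props[OF p i Suc.prems(1) Suc.prems(2)]
  have "prv p i j \<le> p" "unicycle_pendant_adj p (prv p i j) j" "dd p i (prv p i j) = d" by auto
  with Suc.IH[of "prv p i j"] show ?case by auto
qed

lemma graph_dist_eq:
  assumes p: "p \<ge> 3" and i: "i \<le> p" and j: "j \<le> p"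
  shows "graph_dist (unicycle_pendant_adj p) i j = dd p i j"
  unfolding graph_dist_def
  by (rule Least_equality) (use relpowp_reach[OF p i j refl] relpowp_bound[OF p i] in auto)



definition gg :: "int \<Rightarrow> int \<Rightarrow> int" where "gg p t = min (t mod p) (p - t mod p)"

lemma gg_vals:
  fixes m :: int and t :: int
  assumes p: "p = 2 * m" and m: "m \<ge> 2"
  shows "(t mod p = 0 \<longrightarrow> gg p (t - 1) = 1 \<and> gg p t = 0 \<and> gg p (t + 1) = 1)
       \<and> (0 < t mod p \<and> t mod p < m \<longrightarrow> gg p (t - 1) = t mod p - 1 \<and> gg p t = t mod p \<and> gg p (t + 1) = t mod p + 1)
       \<and> (t mod p = m \<longrightarrow> gg p (t - 1) = m - 1 \<and> gg p t = m \<and> gg p (t + 1) = m - 1)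
       \<and> (m < t mod p \<longrightarrow> gg p (t - 1) = p - t mod p + 1 \<and> gg p t = p - t mod p \<and> gg p (t + 1) = p - t mod p - 1)"
proof -
  define r where "r = t mod p"
  have p0: "p > 0" using p m by simp
  have r: "0 \<le> r" "r < p" unfolding r_def using p0 by auto
  have up: "(t + 1) mod p = (if r + 1 = p then 0 else r + 1)"
  proof -
    have "(t + 1) mod p = (r + 1) mod p" unfolding r_def by (simp add: mod_add_left_eq)
    thus ?thesis using r by (auto simp: mod_pos_pos_trivial)
  qed
  have dn: "(t - 1) mod p = (if r = 0 then p - 1 else r - 1)"
  proof -
    have "(t - 1) mod p = (r - 1) mod p" unfolding r_def by (simp add: mod_diff_left_eq)
    thus ?thesis using r p0 by (auto simp: mod_pos_pos_trivial zmod_minus1)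
  qed
  show ?thesis unfolding r_def[symmetric] gg_def up dn using r p m by auto
qed

lemma sd_gg:
  fixes m :: int and t :: int
  assumes p: "p = 2 * m" and m: "m \<ge> 2"
  shows "(gg p (t - 1))^2 - 2 * (gg p t)^2 + (gg p (t + 1))^2 = (if t mod p = m then 2 - 4 * m else 2)"
    and "gg p (t - 1) - 2 * gg p t + gg p (t + 1) = (if t mod p = 0 then 2 else if t mod p = m then -2 else 0)"
proof -
  have p0: "p > 0" using p m by simp
  have r: "0 \<le> t mod p" "t mod p < p" using p0 by auto
  note v = gg_vals[OF p m, of t]
  consider "t mod p = 0" | "0 < t mod p \<and> t mod p < m" | "t mod p = m" | "m < t mod p" using r by linarith
  hence "(gg p (t - 1))^2 - 2 * (gg p t)^2 + (gg p (t + 1))^2 = (if t mod p = m then 2 - 4 * m else 2)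
     \<and> gg p (t - 1) - 2 * gg p t + gg p (t + 1) = (if t mod p = 0 then 2 else if t mod p = m then -2 else 0)"
  proof cases
    case 1 thus ?thesis using v m by simp
  next
    case 2
    have e: "gg p (t - 1) = t mod p - 1" "gg p t = t mod p" "gg p (t + 1) = t mod p + 1" using v 2 by auto
    show ?thesis unfolding e using 2 m by (simp add: power2_eq_square algebra_simps)
  next
    case 3
    have e: "gg p (t - 1) = m - 1" "gg p t = m" "gg p (t + 1) = m - 1" using v 3 by auto
    show ?thesis unfolding e using 3 m by (simp add: power2_eq_square algebra_simps)
  next
    case 4
    have e: "gg p (t - 1) = p - t mod p + 1" "gg p t = p - t mod p" "gg p (t + 1) = p - t mod p - 1" using v 4 by auto
    show ?thesis unfolding e using 4 m p by (simp add: power2_eq_square algebra_simps)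
  qed
  thus "(gg p (t - 1))^2 - 2 * (gg p t)^2 + (gg p (t + 1))^2 = (if t mod p = m then 2 - 4 * m else 2)"
    and "gg p (t - 1) - 2 * gg p t + gg p (t + 1) = (if t mod p = 0 then 2 else if t mod p = m then -2 else 0)"
    by auto
qed


lemma nx_lt: "j < p \<Longrightarrow> nx p j < p" unfolding nx_def by auto
lemma pv_lt: "j < p \<Longrightarrow> pv p j < p" unfolding pv_def by auto
lemma pv_nx: "j < p \<Longrightarrow> pv p (nx p j) = j" unfolding pv_def nx_def by auto
lemma nx_pv: "j < p \<Longrightarrow> nx p (pv p j) = j" unfolding pv_def nx_def by auto

lemma gg_cong: "a mod p = b mod p \<Longrightarrow> gg p a = gg p b" unfolding gg_def by simp

lemma cyc_gg: "i < p \<Longrightarrow> j < p \<Longrightarrow> int (cyc p i j) = gg (int p) (int j - int i)"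
proof -
  assume i: "i < p" and j: "j < p"
  show ?thesis
  proof (cases "i \<le> j")
    case True
    hence "(int j - int i) mod int p = int j - int i" using j by (simp add: mod_pos_pos_trivial)
    thus ?thesis unfolding cyc_def gg_def using True j by auto
  next
    case False
    hence "(int j - int i) mod int p = int p - (int i - int j)"
    proof -
      have "(int j - int i) mod int p = (int j - int i + int p) mod int p" by simp
      also have "\<dots> = int j - int i + int p" using False i by (intro mod_pos_pos_trivial) auto
      finally show ?thesis by simp
    qed
    thus ?thesis unfolding cyc_def gg_def using False i by auto
  qed
qed

lemma gg_nx: "i < p \<Longrightarrow> j < p \<Longrightarrow> gg (int p) (int (nx p j) - int i) = gg (int p) (int j - int i + 1)"
proof (rule gg_cong)
  assume i: "i < p" and j: "j < p"
  show "(int (nx p j) - int i) mod int p = (int j - int i + 1) mod int p"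
  proof (cases "j + 1 = p")
    case True
    hence "int j - int i + 1 = (int (nx p j) - int i) + int p" unfolding nx_def by simp
    thus ?thesis by (metis mod_add_self2)
  next
    case False
    hence e: "int (nx p j) - int i = int j - int i + 1" unfolding nx_def by simp
    show ?thesis unfolding e ..
  qed
qed

lemma gg_pv: "i < p \<Longrightarrow> j < p \<Longrightarrow> gg (int p) (int (pv p j) - int i) = gg (int p) (int j - int i - 1)"
proof (rule gg_cong)
  assume i: "i < p" and j: "j < p"
  show "(int (pv p j) - int i) mod int p = (int j - int i - 1) mod int p"
  proof (cases "j = 0")
    case True
    hence "int (pv p j) - int i = (int j - int i - 1) + int p" unfolding pv_def using j by simp
    thus ?thesis by (metis mod_add_self2)
  next
    case False
    hence e: "int (pv p j) - int i = int j - int i - 1" unfolding pv_def by (simp add: of_nat_diff)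
    show ?thesis unfolding e ..
  qed
qed

definition FF :: "nat \<Rightarrow> nat \<Rightarrow> nat \<Rightarrow> real" where "FF p i j = (real (dd p i j))^2"

definition opp :: "nat \<Rightarrow> nat \<Rightarrow> nat" where "opp m i = (if i < m then i + m else i - m)"

lemma opp_iff:
  assumes p: "p = 2 * m" and i: "i < p" and j: "j < p"
  shows "((int j - int i) mod int p = int m) \<longleftrightarrow> j = opp m i"
proof (cases "i \<le> j")
  case True
  hence "(int j - int i) mod int p = int j - int i" using j by (simp add: mod_pos_pos_trivial)
  thus ?thesis using True i j p unfolding opp_def by auto
next
  case False
  have "(int j - int i) mod int p = (int j - int i + int p) mod int p" by simp
  also have "\<dots> = int j - int i + int p" using False i by (intro mod_pos_pos_trivial) auto
  finally show ?thesis using False i j p unfolding opp_def by auto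
qed

lemma SD1:
  assumes p: "p = 2 * m" and m: "m \<ge> 2" and i: "i < p" and j: "j < p"
  shows "FF p i (pv p j) - 2 * FF p i j + FF p i (nx p j) = (if j = opp m i then 2 - 4 * real m else 2)"
proof -
  have pI: "int p = 2 * int m" "int m \<ge> 2" using p m by auto
  have e1: "real (dd p i j) = real_of_int (gg (int p) (int j - int i))"
  proof -
    have "real (dd p i j) = real_of_int (int (cyc p i j))" using i j by (simp add: dd_def)
    thus ?thesis unfolding cyc_gg[OF i j] .
  qed
  have e2: "real (dd p i (nx p j)) = real_of_int (gg (int p) (int j - int i + 1))"
  proof -
    have "real (dd p i (nx p j)) = real_of_int (int (cyc p i (nx p j)))" using i nx_lt[OF j] by (simp add: dd_def)
    thus ?thesis unfolding cyc_gg[OF i nx_lt[OF j]] gg_nx[OF i j] .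
  qed
  have e3: "real (dd p i (pv p j)) = real_of_int (gg (int p) (int j - int i - 1))"
  proof -
    have "real (dd p i (pv p j)) = real_of_int (int (cyc p i (pv p j)))" using i pv_lt[OF j] by (simp add: dd_def)
    thus ?thesis unfolding cyc_gg[OF i pv_lt[OF j]] gg_pv[OF i j] .
  qed
  have "FF p i (pv p j) - 2 * FF p i j + FF p i (nx p j) =
     real_of_int ((gg (int p) (int j - int i - 1))^2 - 2 * (gg (int p) (int j - int i))^2 + (gg (int p) (int j - int i + 1))^2)"
    unfolding FF_def e1 e2 e3 by simp
  also have "\<dots> = real_of_int (if (int j - int i) mod int p = int m then 2 - 4 * int m else 2)"
    by (rule arg_cong[where f=real_of_int], rule sd_gg(1)[OF pI])
  also have "\<dots> = (if j = opp m i then 2 - 4 * real m else 2)"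
    unfolding opp_iff[OF p i j] by simp
  finally show ?thesis .
qed

lemma SD2:
  assumes p: "p = 2 * m" and m: "m \<ge> 2" and j: "j < p"
  shows "FF p p (pv p j) - 2 * FF p p j + FF p p (nx p j) =
     2 + (if j = 0 then 4 else 0) - (if j = m then 4 + 4 * real m else 0)"
proof -
  have pI: "int p = 2 * int m" "int m \<ge> 2" using p m by auto
  have p0: "0 < p" using p m by simp
  define a where "a = gg (int p) (int j - 1)"
  define b where "b = gg (int p) (int j)"
  define c where "c = gg (int p) (int j + 1)"
  have e1: "real (dd p p j) = 1 + real_of_int b"
  proof -
    have "real (dd p p j) = 1 + real_of_int (int (cyc p 0 j))" using j by (simp add: dd_def)
    thus ?thesis unfolding cyc_gg[OF p0 j] b_def by simp
  qed
  have e2: "real (dd p p (nx p j)) = 1 + real_of_int c"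
  proof -
    have "real (dd p p (nx p j)) = 1 + real_of_int (int (cyc p 0 (nx p j)))" using nx_lt[OF j] by (simp add: dd_def)
    thus ?thesis unfolding cyc_gg[OF p0 nx_lt[OF j]] gg_nx[OF p0 j] c_def by simp
  qed
  have e3: "real (dd p p (pv p j)) = 1 + real_of_int a"
  proof -
    have "real (dd p p (pv p j)) = 1 + real_of_int (int (cyc p 0 (pv p j)))" using pv_lt[OF j] by (simp add: dd_def)
    thus ?thesis unfolding cyc_gg[OF p0 pv_lt[OF j]] gg_pv[OF p0 j] a_def by simp
  qed
  have s1: "a^2 - 2 * b^2 + c^2 = (if int j mod int p = int m then 2 - 4 * int m else 2)"
    unfolding a_def b_def c_def using sd_gg(1)[OF pI, of "int j"] by simp
  have s2: "a - 2 * b + c = (if int j mod int p = 0 then 2 else if int j mod int p = int m then -2 else 0)"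
    using sd_gg(2)[OF pI, of "int j"] unfolding a_def b_def c_def by simp
  have jm: "int j mod int p = int j" using j by (simp add: mod_pos_pos_trivial)
  have "FF p p (pv p j) - 2 * FF p p j + FF p p (nx p j) =
      real_of_int (a^2 - 2 * b^2 + c^2) + 2 * real_of_int (a - 2 * b + c)"
    unfolding FF_def e1 e2 e3 by (simp add: power2_eq_square algebra_simps)
  also have "\<dots> = 2 + (if j = 0 then 4 else 0) - (if j = m then 4 + 4 * real m else 0)"
    unfolding s1 s2 jm using m by (simp split: if_split)
  finally show ?thesis .
qed


section \<open>Sums on the cycle\<close>

definition Lop :: "nat \<Rightarrow> (nat \<Rightarrow> real) \<Rightarrow> nat \<Rightarrow> real" where
  "Lop p \<alpha> j = \<alpha> (pv p j) - 2 * \<alpha> j + \<alpha> (nx p j)"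

lemma sum_nx: "(\<Sum>j<p. f (nx p j)) = (\<Sum>j<p. f j)"
  by (rule sum.reindex_bij_witness[of _ "pv p" "nx p"]) (auto simp: nx_lt pv_lt pv_nx nx_pv)

lemma sum_pv: "(\<Sum>j<p. f (pv p j)) = (\<Sum>j<p. f j)"
  by (rule sum.reindex_bij_witness[of _ "nx p" "pv p"]) (auto simp: nx_lt pv_lt pv_nx nx_pv)

lemma Kgen: "(\<Sum>j<p. G j * Lop p \<alpha> j) = (\<Sum>j<p. \<alpha> j * (G (pv p j) - 2 * G j + G (nx p j)))"
proof -
  have a: "(\<Sum>j<p. G j * \<alpha> (pv p j)) = (\<Sum>j<p. G (nx p j) * \<alpha> j)"
    using sum_nx[of "\<lambda>j. G j * \<alpha> (pv p j)" p] by (simp add: pv_nx)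
  have b: "(\<Sum>j<p. G j * \<alpha> (nx p j)) = (\<Sum>j<p. G (pv p j) * \<alpha> j)"
    using sum_pv[of "\<lambda>j. G j * \<alpha> (nx p j)" p] by (simp add: nx_pv)
  have "(\<Sum>j<p. G j * Lop p \<alpha> j) = (\<Sum>j<p. G j * \<alpha> (pv p j)) - 2 * (\<Sum>j<p. G j * \<alpha> j) + (\<Sum>j<p. G j * \<alpha> (nx p j))"
    unfolding Lop_def by (simp add: algebra_simps sum.distrib sum_subtractf sum_distrib_left)
  also have "\<dots> = (\<Sum>j<p. \<alpha> j * (G (pv p j) - 2 * G j + G (nx p j)))"
    unfolding a b by (simp add: algebra_simps sum.distrib sum_subtractf sum_distrib_left)
  finally show ?thesis .
qed

lemma Lop_sum: "(\<Sum>j<p. Lop p \<alpha> j) = 0"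
  using Kgen[of "\<lambda>_. 1" p \<alpha>] by simp

lemma Lop_sq: "(\<Sum>j<p. Lop p \<alpha> j * \<alpha> j) = - (\<Sum>j<p. (\<alpha> (nx p j) - \<alpha> j)^2)"
proof -
  have a: "(\<Sum>j<p. \<alpha> (pv p j) * \<alpha> j) = (\<Sum>j<p. \<alpha> j * \<alpha> (nx p j))"
    using sum_nx[of "\<lambda>j. \<alpha> (pv p j) * \<alpha> j" p] by (simp add: pv_nx)
  have b: "(\<Sum>j<p. (\<alpha> (nx p j))^2) = (\<Sum>j<p. (\<alpha> j)^2)"
    using sum_nx[of "\<lambda>j. (\<alpha> j)^2" p] by simp
  have "(\<Sum>j<p. Lop p \<alpha> j * \<alpha> j) = (\<Sum>j<p. \<alpha> (pv p j) * \<alpha> j) - 2 * (\<Sum>j<p. (\<alpha> j)^2) + (\<Sum>j<p. \<alpha> j * \<alpha> (nx p j))"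
    unfolding Lop_def by (simp add: algebra_simps sum.distrib sum_subtractf sum_distrib_left power2_eq_square)
  also have "\<dots> = 2 * (\<Sum>j<p. \<alpha> j * \<alpha> (nx p j)) - 2 * (\<Sum>j<p. (\<alpha> j)^2)" unfolding a by simp
  also have "(\<Sum>j<p. (\<alpha> (nx p j) - \<alpha> j)^2) = (\<Sum>j<p. (\<alpha> (nx p j))^2) - 2 * (\<Sum>j<p. \<alpha> j * \<alpha> (nx p j)) + (\<Sum>j<p. (\<alpha> j)^2)"
    by (simp add: power2_diff sum.distrib sum_subtractf sum_distrib_left algebra_simps)
  ultimately show ?thesis unfolding b by simp
qed

lemma Lop_cong: "i < p \<Longrightarrow> (\<And>t. t < p \<Longrightarrow> f t = h t) \<Longrightarrow> Lop p f i = Lop p h i"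
  unfolding Lop_def by (simp add: nx_lt pv_lt)

lemma Lop_lin: "Lop p (\<lambda>t. \<Sum>j\<in>J. c j * f j t) i = (\<Sum>j\<in>J. c j * Lop p (f j) i)"
  unfolding Lop_def by (simp add: sum.distrib sum_subtractf sum_distrib_left algebra_simps)

lemma sq_zero_const:
  fixes \<alpha> :: "nat \<Rightarrow> real"
  assumes "(\<Sum>j<p. (\<alpha> (nx p j) - \<alpha> j)^2) = 0"
  shows "\<And>j. j < p \<Longrightarrow> \<alpha> j = \<alpha> 0"
proof -
  have z: "\<And>j. j < p \<Longrightarrow> \<alpha> (nx p j) = \<alpha> j"
    using assms sum_nonneg_eq_0_iff[of "{..<p}" "\<lambda>j. (\<alpha> (nx p j) - \<alpha> j)^2"] by auto
  fix j assume "j < p"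
  thus "\<alpha> j = \<alpha> 0"
  proof (induction j)
    case 0 thus ?case by simp
  next
    case (Suc j)
    hence "nx p j = Suc j" unfolding nx_def by simp
    thus ?case using z[of j] Suc by simp
  qed
qed

lemma FF_sym: "i \<le> p \<Longrightarrow> j \<le> p \<Longrightarrow> FF p i j = FF p j i"
  unfolding FF_def dd_def cyc_def by (auto simp: min.commute)

lemma row_cyc:
  assumes p: "p = 2 * m" and m: "m \<ge> 2" and i: "i < p"
  shows "(\<Sum>j<p. FF p i j * Lop p \<alpha> j) = 2 * (\<Sum>j<p. \<alpha> j) - 4 * real m * \<alpha> (opp m i)"
proof -
  have o: "opp m i < p" using i p unfolding opp_def by auto
  have "(\<Sum>j<p. FF p i j * Lop p \<alpha> j) = (\<Sum>j<p. \<alpha> j * (if j = opp m i then 2 - 4 * real m else 2))"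
    unfolding Kgen by (rule sum.cong) (auto simp: SD1[OF p m i])
  also have "\<dots> = (\<Sum>j<p. 2 * \<alpha> j - (if j = opp m i then 4 * real m * \<alpha> j else 0))"
    by (rule sum.cong) (auto simp: algebra_simps)
  also have "\<dots> = 2 * (\<Sum>j<p. \<alpha> j) - 4 * real m * \<alpha> (opp m i)"
    using o by (simp add: sum_subtractf sum_distrib_left)
  finally show ?thesis .
qed

lemma row_pend:
  assumes p: "p = 2 * m" and m: "m \<ge> 2"
  shows "(\<Sum>j<p. FF p p j * Lop p \<alpha> j) = 2 * (\<Sum>j<p. \<alpha> j) + 4 * \<alpha> 0 - (4 + 4 * real m) * \<alpha> m"
proof -
  have "(\<Sum>j<p. FF p p j * Lop p \<alpha> j) = (\<Sum>j<p. \<alpha> j * (2 + (if j = 0 then 4 else 0) - (if j = m then 4 + 4 * real m else 0)))"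
    unfolding Kgen by (rule sum.cong) (auto simp: SD2[OF p m])
  also have "\<dots> = (\<Sum>j<p. 2 * \<alpha> j + (if j = 0 then 4 * \<alpha> j else 0) - (if j = m then (4 + 4 * real m) * \<alpha> j else 0))"
    by (rule sum.cong) (auto simp: algebra_simps)
  also have "\<dots> = 2 * (\<Sum>j<p. \<alpha> j) + 4 * \<alpha> 0 - (4 + 4 * real m) * \<alpha> m"
    using p m by (simp add: sum_subtractf sum.distrib sum_distrib_left)
  finally show ?thesis .
qed


lemma sum_split_add: "(\<Sum>t<a + (b::nat). f t) = (\<Sum>t<a. f t) + (\<Sum>t<b. f (a + t))"
  by (induction b) (auto simp: add.commute add.left_commute)

lemma QF_neg:
  fixes g :: "nat \<Rightarrow> real"
  assumes p: "p = 2 * m" and m: "m \<ge> 2"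
  defines "\<alpha> \<equiv> \<lambda>t. if t < m then g t else - g (t - m)"
  defines "X \<equiv> \<lambda>i. if i < p then Lop p \<alpha> i + (if i = 0 then - (real m + 2) * g m else 0) else real m * g m"
  shows "(\<Sum>i<p+1. X i * (\<Sum>j<p+1. FF p i j * X j))
     = - 4 * real m * (\<Sum>j<p. (\<alpha> (nx p j) - \<alpha> j)^2) - 2 * real m * (real m + 2) * (g m)^2"
proof -
  let ?c = "- (real m + 2) * g m"
  have p0: "0 < p" using p m by simp
  have sa: "(\<Sum>t<p. \<alpha> t) = 0"
    unfolding p mult_2 sum_split_add unfolding \<alpha>_def by (simp add: sum_negf)
  have anti: "\<And>i. i < p \<Longrightarrow> \<alpha> (opp m i) = - \<alpha> i"
    unfolding \<alpha>_def opp_def using p by auto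
  have a0: "\<alpha> 0 = g 0" and am: "\<alpha> m = - g 0" unfolding \<alpha>_def using m by auto
  have o0: "opp m 0 = m" unfolding opp_def using m by simp
  have F00: "FF p 0 0 = 0" and Fpp: "FF p p p = 0" and F0p: "FF p 0 p = 1" and Fp0: "FF p p 0 = 1"
    unfolding FF_def dd_def cyc_def using p0 by auto
  have Xp: "X p = real m * g m" unfolding X_def by simp
  have inner_sum: "\<And>i. (\<Sum>j<p+1. FF p i j * X j) = (\<Sum>j<p. FF p i j * Lop p \<alpha> j) + FF p i 0 * ?c + FF p i p * (real m * g m)"
  proof -
    fix i
    have "(\<Sum>j<p. FF p i j * X j) = (\<Sum>j<p. FF p i j * Lop p \<alpha> j + (if j = 0 then FF p i j * ?c else 0))"
      unfolding X_def by (rule sum.cong) (auto simp: algebra_simps)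
    also have "\<dots> = (\<Sum>j<p. FF p i j * Lop p \<alpha> j) + FF p i 0 * ?c"
      using p0 by (simp add: sum.distrib)
    finally show "(\<Sum>j<p+1. FF p i j * X j) = (\<Sum>j<p. FF p i j * Lop p \<alpha> j) + FF p i 0 * ?c + FF p i p * (real m * g m)"
      using Xp by simp
  qed
  have inner_cyc: "\<And>i. i < p \<Longrightarrow> (\<Sum>j<p+1. FF p i j * X j) = 4 * real m * \<alpha> i + FF p i 0 * ?c + FF p i p * (real m * g m)"
    unfolding inner_sum using row_cyc[OF p m] sa anti by simp
  have inner_p: "(\<Sum>j<p+1. FF p p j * X j) = (8 + 4 * real m) * g 0 - (real m + 2) * g m"
    unfolding inner_sum row_pend[OF p m] sa a0 am Fp0 Fpp by (simp add: algebra_simps)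
  have inner_0: "(\<Sum>j<p+1. FF p 0 j * X j) = 4 * real m * g 0 + real m * g m"
    unfolding inner_cyc[OF p0] a0 F00 F0p by simp
  have L0: "(\<Sum>i<p. Lop p \<alpha> i * FF p i 0) = 4 * real m * g 0"
  proof -
    have "(\<Sum>i<p. Lop p \<alpha> i * FF p i 0) = (\<Sum>i<p. FF p 0 i * Lop p \<alpha> i)"
      by (rule sum.cong) (auto simp: FF_sym[of 0 p] mult.commute)
    also have "\<dots> = 4 * real m * g 0" unfolding row_cyc[OF p m p0] sa o0 am by simp
    finally show ?thesis .
  qed
  have Lp: "(\<Sum>i<p. Lop p \<alpha> i * FF p i p) = (8 + 4 * real m) * g 0"
  proof -
    have "(\<Sum>i<p. Lop p \<alpha> i * FF p i p) = (\<Sum>i<p. FF p p i * Lop p \<alpha> i)"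
      by (rule sum.cong) (auto simp: FF_sym[of _ p] mult.commute)
    also have "\<dots> = (8 + 4 * real m) * g 0" unfolding row_pend[OF p m] sa a0 am by (simp add: algebra_simps)
    finally show ?thesis .
  qed
  define SS where "SS = (\<Sum>j<p. (\<alpha> (nx p j) - \<alpha> j)^2)"
  have "(\<Sum>i<p. X i * (\<Sum>j<p+1. FF p i j * X j)) =
      (\<Sum>i<p. Lop p \<alpha> i * (4 * real m * \<alpha> i + FF p i 0 * ?c + FF p i p * (real m * g m))
         + (if i = 0 then ?c * (4 * real m * g 0 + real m * g m) else 0))"
  proof (rule sum.cong[OF refl])
    fix i assume "i \<in> {..<p}"
    hence i: "i < p" by simp
    have Xi: "X i = Lop p \<alpha> i + (if i = 0 then ?c else 0)" unfolding X_def using i by simp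
    show "X i * (\<Sum>j<p+1. FF p i j * X j) = Lop p \<alpha> i * (4 * real m * \<alpha> i + FF p i 0 * ?c + FF p i p * (real m * g m))
         + (if i = 0 then ?c * (4 * real m * g 0 + real m * g m) else 0)"
    proof (cases "i = 0")
      case True
      show ?thesis unfolding Xi inner_cyc[OF i] using True a0 F00 F0p by (simp add: algebra_simps)
    next
      case False
      show ?thesis unfolding Xi inner_cyc[OF i] using False by simp
    qed
  qed
  also have "\<dots> = (\<Sum>i<p. 4 * real m * (Lop p \<alpha> i * \<alpha> i)) + (\<Sum>i<p. ?c * (Lop p \<alpha> i * FF p i 0))
        + (\<Sum>i<p. real m * g m * (Lop p \<alpha> i * FF p i p)) + (\<Sum>i<p. if i = 0 then ?c * (4 * real m * g 0 + real m * g m) else 0)"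
    unfolding sum.distrib[symmetric] by (rule sum.cong) (simp_all add: algebra_simps)
  also have "\<dots> = 4 * real m * (\<Sum>i<p. Lop p \<alpha> i * \<alpha> i) + ?c * (\<Sum>i<p. Lop p \<alpha> i * FF p i 0)
        + real m * g m * (\<Sum>i<p. Lop p \<alpha> i * FF p i p) + ?c * (4 * real m * g 0 + real m * g m)"
    unfolding sum_distrib_left[symmetric] sum.delta using p0 by simp
  also have "\<dots> = - 4 * real m * SS + ?c * (4 * real m * g 0) + real m * g m * ((8 + 4 * real m) * g 0)
        + ?c * (4 * real m * g 0 + real m * g m)"
    unfolding Lop_sq L0 Lp SS_def by simp
  finally have A: "(\<Sum>i<p. X i * (\<Sum>j<p+1. FF p i j * X j)) = - 4 * real m * SS + ?c * (4 * real m * g 0)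
     + real m * g m * ((8 + 4 * real m) * g 0) + ?c * (4 * real m * g 0 + real m * g m)" .
  have "(\<Sum>i<p+1. X i * (\<Sum>j<p+1. FF p i j * X j)) = (\<Sum>i<p. X i * (\<Sum>j<p+1. FF p i j * X j)) + X p * (\<Sum>j<p+1. FF p p j * X j)"
    by simp
  also have "\<dots> = - 4 * real m * SS - 2 * real m * (real m + 2) * (g m)^2"
    unfolding A Xp inner_p by (simp add: algebra_simps power2_eq_square)
  finally show ?thesis unfolding SS_def .
qed

lemma QF_pos:
  fixes g :: "nat \<Rightarrow> real"
  assumes p: "p = 2 * m" and m: "m \<ge> 2"
  defines "\<alpha> \<equiv> \<lambda>t. if t < m then (if t = 0 then 0 else g t) else (if t = m then 0 else g (t - m))"
  defines "X \<equiv> \<lambda>i. if i < p then Lop p \<alpha> i + g 0 else 0"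
  shows "(\<Sum>i<p+1. X i * (\<Sum>j<p+1. FF p i j * X j))
     = 4 * real m * (\<Sum>j<p. (\<alpha> (nx p j) - \<alpha> j)^2) + (g 0)^2 * (\<Sum>i<p. \<Sum>j<p. FF p i j)"
proof -
  have p0: "0 < p" using p m by simp
  have sym: "\<And>i. i < p \<Longrightarrow> \<alpha> (opp m i) = \<alpha> i"
    unfolding \<alpha>_def opp_def using p by auto
  define sA where "sA = (\<Sum>t<p. \<alpha> t)"
  define R where "R = (\<lambda>i. \<Sum>j<p. FF p i j)"
  have inner: "\<And>i. i < p \<Longrightarrow> (\<Sum>j<p+1. FF p i j * X j) = 2 * sA - 4 * real m * \<alpha> i + g 0 * R i"
  proof -
    fix i assume i: "i < p"
    have "(\<Sum>j<p+1. FF p i j * X j) = (\<Sum>j<p. FF p i j * Lop p \<alpha> j + g 0 * FF p i j)"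
      unfolding X_def by (simp add: algebra_simps)
    also have "\<dots> = 2 * sA - 4 * real m * \<alpha> i + g 0 * R i"
      unfolding sum.distrib row_cyc[OF p m i] sym[OF i] sA_def R_def by (simp add: sum_distrib_left)
    finally show "(\<Sum>j<p+1. FF p i j * X j) = 2 * sA - 4 * real m * \<alpha> i + g 0 * R i" .
  qed
  have LR: "(\<Sum>i<p. Lop p \<alpha> i * R i) = 0"
  proof -
    have "(\<Sum>i<p. Lop p \<alpha> i * R i) = (\<Sum>j<p. \<Sum>i<p. FF p j i * Lop p \<alpha> i)"
      unfolding R_def sum_distrib_left
      by (subst sum.swap) (rule sum.cong, simp, rule sum.cong, auto simp: FF_sym mult.commute)
    also have "\<dots> = (\<Sum>j<p. 2 * sA - 4 * real m * \<alpha> j)"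
      by (rule sum.cong) (auto simp: row_cyc[OF p m] sym sA_def)
    also have "\<dots> = 0" unfolding sum_subtractf sA_def using p by (simp add: sum_distrib_left mult.assoc)
    finally show ?thesis .
  qed
  have "(\<Sum>i<p+1. X i * (\<Sum>j<p+1. FF p i j * X j)) = (\<Sum>i<p. (Lop p \<alpha> i + g 0) * (2 * sA - 4 * real m * \<alpha> i + g 0 * R i))"
  proof -
    have "(\<Sum>i<p+1. X i * (\<Sum>j<p+1. FF p i j * X j)) = (\<Sum>i<p. X i * (\<Sum>j<p+1. FF p i j * X j))"
      by (simp add: X_def)
    also have "\<dots> = (\<Sum>i<p. (Lop p \<alpha> i + g 0) * (2 * sA - 4 * real m * \<alpha> i + g 0 * R i))"
    proof (rule sum.cong[OF refl])
      fix i assume "i \<in> {..<p}"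
      hence i: "i < p" by simp
      have Xi: "X i = Lop p \<alpha> i + g 0" unfolding X_def using i by simp
      show "X i * (\<Sum>j<p+1. FF p i j * X j) = (Lop p \<alpha> i + g 0) * (2 * sA - 4 * real m * \<alpha> i + g 0 * R i)"
        unfolding inner[OF i] Xi ..
    qed
    finally show ?thesis .
  qed
  also have "\<dots> = (\<Sum>i<p. 2 * sA * Lop p \<alpha> i) + (\<Sum>i<p. (- 4 * real m) * (Lop p \<alpha> i * \<alpha> i)) + (\<Sum>i<p. g 0 * (Lop p \<alpha> i * R i))
      + (\<Sum>i<p. g 0 * (2 * sA)) + (\<Sum>i<p. (- 4 * real m * g 0) * \<alpha> i) + (\<Sum>i<p. (g 0)^2 * R i)"
    unfolding sum.distrib[symmetric] by (rule sum.cong) (simp_all add: algebra_simps power2_eq_square)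
  also have "\<dots> = 2 * sA * (\<Sum>i<p. Lop p \<alpha> i) - 4 * real m * (\<Sum>i<p. Lop p \<alpha> i * \<alpha> i) + g 0 * (\<Sum>i<p. Lop p \<alpha> i * R i)
      + g 0 * (2 * sA * real p - 4 * real m * sA) + (g 0)^2 * (\<Sum>i<p. R i)"
    unfolding sum_distrib_left[symmetric] sA_def by (simp add: algebra_simps)
  also have "\<dots> = 4 * real m * (\<Sum>j<p. (\<alpha> (nx p j) - \<alpha> j)^2) + (g 0)^2 * (\<Sum>i<p. R i)"
    unfolding Lop_sum Lop_sq LR using p by simp
  finally show ?thesis unfolding R_def .
qed


section \<open>The quadratic forms on explicit subspaces\<close>

lemma Delta_eq:
  assumes p: "p \<ge> 3"
  shows "dist_sq_matrix (p+1) (unicycle_pendant_adj p) = mat (p+1) (p+1) (\<lambda>(i,j). FF p i j)"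
  unfolding dist_sq_matrix_def FF_def
  by (rule eq_matI) (auto simp: graph_dist_eq[OF p])

lemma quad_form:
  assumes x: "x \<in> carrier_vec n"
  shows "x \<bullet> (mat n n (\<lambda>(i,j). FF p i j) *\<^sub>v x) = (\<Sum>i<n. x $ i * (\<Sum>j<n. FF p i j * x $ j))"
  using x by (simp add: scalar_prod_def mult_mat_vec_def row_def atLeast0LessThan)

lemma mat_vec_entry:
  assumes N: "N \<in> carrier_mat n k" and g: "\<gamma> \<in> carrier_vec k" and i: "i < n"
  shows "(N *\<^sub>v \<gamma>) $ i = (\<Sum>j<k. N $$ (i,j) * \<gamma> $ j)"
  using N g i by (simp add: scalar_prod_def mult_mat_vec_def row_def atLeast0LessThan)

definition indn :: "nat \<Rightarrow> nat \<Rightarrow> nat \<Rightarrow> real" where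
  "indn m j t = (if t = j then 1 else if t = j + m then -1 else 0)"

definition indp :: "nat \<Rightarrow> nat \<Rightarrow> nat \<Rightarrow> real" where
  "indp m j t = (if t = j \<or> t = j + m then 1 else 0)"

lemma indn_sum:
  assumes t: "t < 2 * m"
  shows "(\<Sum>j<m. g j * indn m j t) = (if t < m then g t else - g (t - m))"
proof (cases "t < m")
  case True
  have "(\<Sum>j<m. g j * indn m j t) = (\<Sum>j<m. if j = t then g j else 0)"
    by (rule sum.cong) (use True in \<open>auto simp: indn_def\<close>)
  thus ?thesis using True by simp
next
  case False
  have "(\<Sum>j<m. g j * indn m j t) = (\<Sum>j<m. if j = t - m then - g j else 0)"
    by (rule sum.cong) (use False in \<open>auto simp: indn_def\<close>)
  thus ?thesis using False t by simp
qed

lemma indp_sum: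
  assumes t: "t < 2 * m"
  shows "(\<Sum>j<m. (if j = 0 then 0 else g j) * indp m j t) =
    (if t < m then (if t = 0 then 0 else g t) else (if t = m then 0 else g (t - m)))"
proof (cases "t < m")
  case True
  have "(\<Sum>j<m. (if j = 0 then 0 else g j) * indp m j t) = (\<Sum>j<m. if j = t then (if j = 0 then 0 else g j) else 0)"
    by (rule sum.cong) (use True in \<open>auto simp: indp_def\<close>)
  thus ?thesis using True by simp
next
  case False
  have "(\<Sum>j<m. (if j = 0 then 0 else g j) * indp m j t) = (\<Sum>j<m. if j = t - m then (if j = 0 then 0 else g j) else 0)"
    by (rule sum.cong) (use False in \<open>auto simp: indp_def\<close>)
  thus ?thesis using False t by auto
qed

lemma neg_subspace:
  fixes m p :: nat
  assumes p: "p = 2 * m" and m: "m \<ge> 2"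
  defines "N \<equiv> mat (p+1) (m+1) (\<lambda>(i,j). if j < m then (if i < p then Lop p (indn m j) i else 0)
      else (if i = p then real m else if i = 0 then - (real m + 2) else 0))"
  assumes g: "\<gamma> \<in> carrier_vec (m+1)" and g0: "\<gamma> \<noteq> 0\<^sub>v (m+1)"
  shows "-1 * ((N *\<^sub>v \<gamma>) \<bullet> (mat (p+1) (p+1) (\<lambda>(i,j). FF p i j) *\<^sub>v (N *\<^sub>v \<gamma>))) > 0"
proof -
  define gg' where "gg' = (\<lambda>j. \<gamma> $ j)"
  define \<alpha> where "\<alpha> = (\<lambda>t. if t < m then gg' t else - gg' (t - m))"
  define X where "X = (\<lambda>i. if i < p then Lop p \<alpha> i + (if i = 0 then - (real m + 2) * gg' m else 0) else real m * gg' m)"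
  have N: "N \<in> carrier_mat (p+1) (m+1)" unfolding N_def by simp
  have x: "N *\<^sub>v \<gamma> \<in> carrier_vec (p+1)" using N g by simp
  have Xe: "\<And>i. i < p + 1 \<Longrightarrow> (N *\<^sub>v \<gamma>) $ i = X i"
  proof -
    fix i assume i: "i < p + 1"
    have "(N *\<^sub>v \<gamma>) $ i = (\<Sum>j<m. N $$ (i,j) * gg' j) + N $$ (i, m) * gg' m"
      unfolding mat_vec_entry[OF N g i] gg'_def by simp
    also have "\<dots> = X i"
    proof (cases "i < p")
      case True
      have "(\<Sum>j<m. N $$ (i,j) * gg' j) = (\<Sum>j<m. gg' j * Lop p (indn m j) i)"
        by (rule sum.cong) (use i True in \<open>auto simp: N_def\<close>)
      also have "\<dots> = Lop p (\<lambda>t. \<Sum>j<m. gg' j * indn m j t) i" by (rule Lop_lin[symmetric])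
      also have "\<dots> = Lop p \<alpha> i"
        by (rule Lop_cong[OF True]) (use p in \<open>simp add: indn_sum \<alpha>_def\<close>)
      finally show ?thesis using True i unfolding X_def N_def by simp
    next
      case False
      hence "i = p" using i by simp
      thus ?thesis unfolding X_def N_def using p by simp
    qed
    finally show "(N *\<^sub>v \<gamma>) $ i = X i" .
  qed
  have "(N *\<^sub>v \<gamma>) \<bullet> (mat (p+1) (p+1) (\<lambda>(i,j). FF p i j) *\<^sub>v (N *\<^sub>v \<gamma>)) = (\<Sum>i<p+1. X i * (\<Sum>j<p+1. FF p i j * X j))"
    unfolding quad_form[OF x] by (simp add: Xe)
  also have "\<dots> = - 4 * real m * (\<Sum>j<p. (\<alpha> (nx p j) - \<alpha> j)^2) - 2 * real m * (real m + 2) * (gg' m)^2"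
    unfolding X_def \<alpha>_def by (rule QF_neg[OF p m])
  finally have Q: "(N *\<^sub>v \<gamma>) \<bullet> (mat (p+1) (p+1) (\<lambda>(i,j). FF p i j) *\<^sub>v (N *\<^sub>v \<gamma>)) =
     - 4 * real m * (\<Sum>j<p. (\<alpha> (nx p j) - \<alpha> j)^2) - 2 * real m * (real m + 2) * (gg' m)^2" .
  define SS where "SS = (\<Sum>j<p. (\<alpha> (nx p j) - \<alpha> j)^2)"
  have SS0: "SS \<ge> 0" unfolding SS_def by (rule sum_nonneg) simp
  have mpos: "real m > 0" using m by simp
  have "- 4 * real m * SS - 2 * real m * (real m + 2) * (gg' m)^2 < 0"
  proof (cases "gg' m = 0")
    case False
    hence "(gg' m)^2 > 0" by simp
    hence "2 * real m * (real m + 2) * (gg' m)^2 > 0" using mpos by simp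
    moreover have "4 * real m * SS \<ge> 0" using SS0 mpos by simp
    ultimately show ?thesis by linarith
  next
    case True
    have "SS \<noteq> 0"
    proof
      assume "SS = 0"
      hence c: "\<And>j. j < p \<Longrightarrow> \<alpha> j = \<alpha> 0" using sq_zero_const unfolding SS_def by blast
      have "\<alpha> m = - gg' 0" unfolding \<alpha>_def using m by simp
      moreover have "\<alpha> m = \<alpha> 0" using c[of m] p m by simp
      moreover have "\<alpha> 0 = gg' 0" unfolding \<alpha>_def using m by simp
      ultimately have z0: "gg' 0 = 0" by simp
      have "\<And>j. j < m \<Longrightarrow> gg' j = 0"
      proof -
        fix j assume j: "j < m"
        have "\<alpha> j = gg' j" unfolding \<alpha>_def using j by simp
        thus "gg' j = 0" using c[of j] j p z0 \<open>\<alpha> 0 = gg' 0\<close> by simp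
      qed
      hence "\<gamma> = 0\<^sub>v (m+1)" using True g unfolding gg'_def
        by (intro eq_vecI) (auto simp: less_Suc_eq)
      thus False using g0 by simp
    qed
    hence "SS > 0" using SS0 by simp
    thus ?thesis using True mpos by simp
  qed
  note fin = this
  show ?thesis unfolding Q SS_def[symmetric] using fin by (simp only: mult_minus1 neg_0_less_iff_less)
qed

lemma pos_subspace:
  fixes m p :: nat
  assumes p: "p = 2 * m" and m: "m \<ge> 2"
  defines "N \<equiv> mat (p+1) m (\<lambda>(i,j). if i < p then (if j = 0 then 1 else Lop p (indp m j) i) else 0)"
  assumes g: "\<gamma> \<in> carrier_vec m" and g0: "\<gamma> \<noteq> 0\<^sub>v m"
  shows "1 * ((N *\<^sub>v \<gamma>) \<bullet> (mat (p+1) (p+1) (\<lambda>(i,j). FF p i j) *\<^sub>v (N *\<^sub>v \<gamma>))) > 0"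
proof -
  define gg' where "gg' = (\<lambda>j. \<gamma> $ j)"
  define h where "h = (\<lambda>j. if j = 0 then 0 else gg' j)"
  define \<alpha> where "\<alpha> = (\<lambda>t. if t < m then (if t = 0 then 0 else gg' t) else (if t = m then 0 else gg' (t - m)))"
  define X where "X = (\<lambda>i. if i < p then Lop p \<alpha> i + gg' 0 else 0)"
  have m0: "0 < m" using m by simp
  have N: "N \<in> carrier_mat (p+1) m" unfolding N_def by simp
  have x: "N *\<^sub>v \<gamma> \<in> carrier_vec (p+1)" using N g by simp
  have Xe: "\<And>i. i < p + 1 \<Longrightarrow> (N *\<^sub>v \<gamma>) $ i = X i"
  proof -
    fix i assume i: "i < p + 1"
    have "(N *\<^sub>v \<gamma>) $ i = (\<Sum>j<m. N $$ (i,j) * gg' j)"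
      unfolding mat_vec_entry[OF N g i] gg'_def by simp
    also have "\<dots> = X i"
    proof (cases "i < p")
      case True
      have "(\<Sum>j<m. N $$ (i,j) * gg' j) = (\<Sum>j<m. (if j = 0 then gg' j else 0) + h j * Lop p (indp m j) i)"
        by (rule sum.cong) (use i True in \<open>auto simp: N_def h_def\<close>)
      also have "\<dots> = gg' 0 + Lop p (\<lambda>t. \<Sum>j<m. h j * indp m j t) i"
        unfolding sum.distrib Lop_lin using m0 by simp
      also have "Lop p (\<lambda>t. \<Sum>j<m. h j * indp m j t) i = Lop p \<alpha> i"
        by (rule Lop_cong[OF True]) (use p in \<open>simp add: indp_sum[unfolded] h_def \<alpha>_def\<close>)
      finally show ?thesis using True unfolding X_def by simp
    next
      case False
      hence "i = p" using i by simp
      thus ?thesis unfolding X_def N_def using p by simp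
    qed
    finally show "(N *\<^sub>v \<gamma>) $ i = X i" .
  qed
  define S where "S = (\<Sum>i<p. \<Sum>j<p. FF p i j)"
  have "(N *\<^sub>v \<gamma>) \<bullet> (mat (p+1) (p+1) (\<lambda>(i,j). FF p i j) *\<^sub>v (N *\<^sub>v \<gamma>)) = (\<Sum>i<p+1. X i * (\<Sum>j<p+1. FF p i j * X j))"
    unfolding quad_form[OF x] by (simp add: Xe)
  also have "\<dots> = 4 * real m * (\<Sum>j<p. (\<alpha> (nx p j) - \<alpha> j)^2) + (gg' 0)^2 * S"
    unfolding X_def \<alpha>_def S_def by (rule QF_pos[OF p m])
  finally have Q: "(N *\<^sub>v \<gamma>) \<bullet> (mat (p+1) (p+1) (\<lambda>(i,j). FF p i j) *\<^sub>v (N *\<^sub>v \<gamma>)) =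
     4 * real m * (\<Sum>j<p. (\<alpha> (nx p j) - \<alpha> j)^2) + (gg' 0)^2 * S" .
  have S: "S > 0"
  proof -
    have nn: "\<And>i j. FF p i j \<ge> 0" unfolding FF_def by simp
    have p1: "1 < p" using p m by simp
    have a1: "FF p 0 1 = 1" unfolding FF_def dd_def cyc_def using p m by auto
    have a2: "FF p 0 1 \<le> (\<Sum>j<p. FF p 0 j)" by (rule member_le_sum) (use nn p1 in auto)
    have a3: "(\<Sum>j<p. FF p 0 j) \<le> S" unfolding S_def
      by (rule member_le_sum[where f="\<lambda>i. \<Sum>j<p. FF p i j"]) (use nn p1 in \<open>auto intro: sum_nonneg\<close>)
    show ?thesis using a1 a2 a3 by linarith
  qed
  define SS where "SS = (\<Sum>j<p. (\<alpha> (nx p j) - \<alpha> j)^2)"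
  have SS0: "SS \<ge> 0" unfolding SS_def by (rule sum_nonneg) simp
  have mpos: "real m > 0" using m by simp
  have "4 * real m * SS + (gg' 0)^2 * S > 0"
  proof (cases "gg' 0 = 0")
    case False
    hence "(gg' 0)^2 * S > 0" using S by simp
    moreover have "4 * real m * SS \<ge> 0" using SS0 mpos by simp
    ultimately show ?thesis by linarith
  next
    case True
    have "SS \<noteq> 0"
    proof
      assume "SS = 0"
      hence c: "\<And>j. j < p \<Longrightarrow> \<alpha> j = \<alpha> 0" using sq_zero_const unfolding SS_def by blast
      have a0: "\<alpha> 0 = 0" unfolding \<alpha>_def using m by simp
      have "\<And>j. j < m \<Longrightarrow> gg' j = 0"
      proof -
        fix j assume j: "j < m"
        show "gg' j = 0"
        proof (cases "j = 0")
          case True thus ?thesis using \<open>gg' 0 = 0\<close> by simp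
        next
          case False
          hence "\<alpha> j = gg' j" unfolding \<alpha>_def using j by simp
          thus "gg' j = 0" using c[of j] j p a0 by simp
        qed
      qed
      hence "\<gamma> = 0\<^sub>v m" using g unfolding gg'_def by (intro eq_vecI) auto
      thus False using g0 by simp
    qed
    hence "SS > 0" using SS0 by simp
    thus ?thesis using True mpos by simp
  qed
  note fin = this
  show ?thesis unfolding Q SS_def[symmetric] using fin by (simp only: mult_1)
qed

lemma card_partition3:
  fixes d :: "nat \<Rightarrow> real"
  shows "card {i. i < n \<and> 0 < d i} + card {i. i < n \<and> d i < 0} + card {i. i < n \<and> d i = 0} = n"
proof -
  have "{..<n} = ({i. i < n \<and> 0 < d i} \<union> {i. i < n \<and> d i < 0}) \<union> {i. i < n \<and> d i = 0}" by auto
  hence "n = card (({i. i < n \<and> 0 < d i} \<union> {i. i < n \<and> d i < 0}) \<union> {i. i < n \<and> d i = 0})"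
    by (metis card_lessThan)
  also have "\<dots> = card ({i. i < n \<and> 0 < d i} \<union> {i. i < n \<and> d i < 0}) + card {i. i < n \<and> d i = 0}"
    by (rule card_Un_disjoint) auto
  also have "card ({i. i < n \<and> 0 < d i} \<union> {i. i < n \<and> d i < 0}) = card {i. i < n \<and> 0 < d i} + card {i. i < n \<and> d i < 0}"
    by (rule card_Un_disjoint) auto
  finally show ?thesis by simp
qed

theorem lemma6p3:
  fixes m p :: nat
  assumes "p = 2 * m" and "p \<ge> 4"
  shows "(i_plus (dist_sq_matrix (p + 1) (unicycle_pendant_adj p)),
          i_minus (dist_sq_matrix (p + 1) (unicycle_pendant_adj p)),
          i_zero (dist_sq_matrix (p + 1) (unicycle_pendant_adj p))) = (m, m + 1, 0)"
proof -
  note p = assms(1)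
  have m: "m \<ge> 2" using assms by simp
  have p3: "p \<ge> 3" using assms by simp
  define n where "n = p + 1"
  define A where "A = dist_sq_matrix (p + 1) (unicycle_pendant_adj p)"
  have Aeq: "A = mat n n (\<lambda>(i,j). FF p i j)" unfolding A_def n_def by (rule Delta_eq[OF p3])
  have A: "A \<in> carrier_mat n n" unfolding Aeq by simp
  have sym: "transpose_mat A = A" unfolding Aeq n_def
    by (rule eq_matI) (auto simp: FF_sym)
  obtain Q D where Q: "Q \<in> carrier_mat n n" and D: "D \<in> carrier_mat n n"
    and QTQ: "transpose_mat Q * Q = 1\<^sub>m n" and QQT: "Q * transpose_mat Q = 1\<^sub>m n"
    and diag: "diagonal_mat D" and QAQ: "transpose_mat Q * A * Q = D"
    using real_sym_diag[OF A sym] by blast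
  note QD = A Q D QTQ QQT diag QAQ
  define Np where "Np = mat (p+1) m (\<lambda>(i,j). if i < p then (if j = 0 then 1 else Lop p (indp m j) i) else (0::real))"
  define Nn where "Nn = mat (p+1) (m+1) (\<lambda>(i,j). if j < m then (if i < p then Lop p (indn m j) i else 0)
      else (if i = p then real m else if i = 0 then - (real m + 2) else (0::real)))"
  have pos: "m \<le> card {i. i < n \<and> 1 * D $$ (i,i) > 0}"
  proof (rule sylvester_bound[OF QD])
    show "Np \<in> carrier_mat n m" unfolding Np_def n_def by simp
    fix \<gamma> :: "real vec" assume g: "\<gamma> \<in> carrier_vec m" and g0: "\<gamma> \<noteq> 0\<^sub>v m"
    show "1 * ((Np *\<^sub>v \<gamma>) \<bullet> (A *\<^sub>v (Np *\<^sub>v \<gamma>))) > 0"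
      unfolding Aeq n_def Np_def by (rule pos_subspace[OF p m g g0])
  qed
  have neg: "m + 1 \<le> card {i. i < n \<and> -1 * D $$ (i,i) > 0}"
  proof (rule sylvester_bound[OF QD])
    show "Nn \<in> carrier_mat n (m+1)" unfolding Nn_def n_def by simp
    fix \<gamma> :: "real vec" assume g: "\<gamma> \<in> carrier_vec (m+1)" and g0: "\<gamma> \<noteq> 0\<^sub>v (m+1)"
    show "-1 * ((Nn *\<^sub>v \<gamma>) \<bullet> (A *\<^sub>v (Nn *\<^sub>v \<gamma>))) > 0"
      unfolding Aeq n_def Nn_def by (rule neg_subspace[OF p m g g0])
  qed
  have part: "card {i. i < n \<and> 0 < D $$ (i,i)} + card {i. i < n \<and> D $$ (i,i) < 0} + card {i. i < n \<and> D $$ (i,i) = 0} = n"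
    by (rule card_partition3)
  have c1: "card {i. i < n \<and> 0 < D $$ (i,i)} = m" and c2: "card {i. i < n \<and> D $$ (i,i) < 0} = m + 1"
    and c3: "card {i. i < n \<and> D $$ (i,i) = 0} = 0"
  proof -
    have pos': "m \<le> card {i. i < n \<and> 0 < D $$ (i,i)}" using pos by simp
    have neg': "m + 1 \<le> card {i. i < n \<and> D $$ (i,i) < 0}" using neg by simp
    have nn: "n = 2 * m + 1" unfolding n_def p by simp
    show "card {i. i < n \<and> 0 < D $$ (i,i)} = m" "card {i. i < n \<and> D $$ (i,i) < 0} = m + 1"
      "card {i. i < n \<and> D $$ (i,i) = 0} = 0"
      using pos' neg' part nn by linarith+
  qed
  have ip: "i_plus A = m"
    unfolding i_plus_def inertia_count[OF QD, of "\<lambda>a. 0 < a"] c1 ..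
  have im: "i_minus A = m + 1"
    unfolding i_minus_def inertia_count[OF QD, of "\<lambda>a. a < 0"] c2 ..
  have iz: "i_zero A = 0"
  proof (cases "eigenvalue A 0")
    case True
    have "{a. a = 0 \<and> eigenvalue A a} = {0}" using True by auto
    hence "Polynomial.order 0 (char_poly A) = (\<Sum>a \<in> {a. a = 0 \<and> eigenvalue A a}. Polynomial.order a (char_poly A))" by simp
    also have "\<dots> = 0" unfolding inertia_count[OF QD, of "\<lambda>a. a = 0"] c3 ..
    finally show ?thesis unfolding i_zero_def using True by simp
  next
    case False thus ?thesis unfolding i_zero_def by simp
  qed
  show ?thesis using ip im iz unfolding A_def by simp
qed

end
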